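(* Let $k$ be odd and, for $1\le m\le n$, let $C_m$ be the set of positions with exactly $m$ coordinates in $\{0,k-1\}$ and all other coordinates equal to $(k-1)/2$. Let $2\le t\le n-1$, let $I\subseteq\{1,\dots,n\}$ with $|I|=n-t$, let $c_l\in\{0,k-1\}$ for $l\in I$, and let $L=\{p\in M^n: p_l=c_l\ \forall l\in I\}$ be the corresponding external $t$-dimensional layer. For distinct $i,j\notin I$, let $\rho$ be the rotation of $L$: the permutation of $M^n$ sending each $p\in L$ to $\psi_{i,j}(p)$ and fixing all positions outside $L$. Then $\rho$ fixes every position of $C_m$ for every $m\le n-t$, and $\rho$ restricted to $C_{n-t+1}$ is an odd permutation of $C_{n-t+1}$.
   Context: $k\ge2$, $n\ge3$ integers, $M=\{0,\dots,k-1\}$, positions are elements of $M^n$. For distinct $i,j$, $\psi_{i,j}:M^n\to M^n$ is defined by $(\psi_{i,j}p)_i=k-1-p_j$, $(\psi_{i,j}p)_j=p_i$, $(\psi_{i,j}p)_l=p_l$ for $l\notin\{i,j\}$. *)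

theory Defs
  imports Main "HOL-Combinatorics.Permutations"
begin

definition positions :: "nat \<Rightarrow> nat \<Rightarrow> (nat \<Rightarrow> nat) set" where
  "positions k n = {p. (\<forall>l\<in>{1..n}. p l < k) \<and> (\<forall>l. l \<notin> {1..n} \<longrightarrow> p l = 0)}"

definition psi :: "nat \<Rightarrow> nat \<Rightarrow> nat \<Rightarrow> (nat \<Rightarrow> nat) \<Rightarrow> (nat \<Rightarrow> nat)" where
  "psi k i j p = p(i := k - 1 - p j, j := p i)"

definition Cset :: "nat \<Rightarrow> nat \<Rightarrow> nat \<Rightarrow> (nat \<Rightarrow> nat) set" where
  "Cset k n m = {p \<in> positions k n.
      card {l\<in>{1..n}. p l = 0 \<or> p l = k - 1} = m \<and>
      (\<forall>l\<in>{1..n}. p l \<noteq> 0 \<and> p l \<noteq> k - 1 \<longrightarrow> p l = (k - 1) div 2)}"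

definition layer :: "nat \<Rightarrow> nat \<Rightarrow> nat set \<Rightarrow> (nat \<Rightarrow> nat) \<Rightarrow> (nat \<Rightarrow> nat) set" where
  "layer k n I c = {p \<in> positions k n. \<forall>l\<in>I. p l = c l}"

definition rotation :: "nat \<Rightarrow> nat \<Rightarrow> nat set \<Rightarrow> (nat \<Rightarrow> nat) \<Rightarrow> nat \<Rightarrow> nat
    \<Rightarrow> (nat \<Rightarrow> nat) \<Rightarrow> (nat \<Rightarrow> nat)" where
  "rotation k n I c i j p = (if p \<in> layer k n I c then psi k i j p else p)"

definition restrict_perm :: "('a \<Rightarrow> 'a) \<Rightarrow> 'a set \<Rightarrow> 'a \<Rightarrow> 'a" where
  "restrict_perm f S = (\<lambda>x. if x \<in> S then f x else x)"

end

theory Submission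
  imports Defs
begin

definition qq :: "nat \<Rightarrow> nat \<Rightarrow> nat set \<Rightarrow> (nat \<Rightarrow> nat) \<Rightarrow> nat \<Rightarrow> nat \<Rightarrow> nat \<Rightarrow> nat" where
  "qq k n I c i a = (\<lambda>l. if l \<in> I then c l else if l = i then a else if l \<in> {1..n} then (k-1) div 2 else 0)"

lemma qq_facts:
  assumes "k \<ge> 2" "odd k" "I \<subseteq> {1..n}" "card I = n - t" "t \<le> n - 1"
    and "\<forall>l\<in>I. c l = 0 \<or> c l = k - 1"
    and "i \<in> {1..n} - I" and "a = 0 \<or> a = k - 1"
  shows "qq k n I c i a \<in> Cset k n (n - t + 1)" "qq k n I c i a \<in> layer k n I c"
proof -
  have h1: "(k-1) div 2 \<noteq> 0" "(k-1) div 2 \<noteq> k - 1" "(k-1) div 2 < k"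
    using assms(1,2) by (auto elim!: oddE)
  have fin: "finite I" using assms(3) finite_subset by blast
  have pos: "qq k n I c i a \<in> positions k n"
    using assms h1 unfolding positions_def qq_def by auto
  have E: "{l\<in>{1..n}. qq k n I c i a l = 0 \<or> qq k n I c i a l = k - 1} = insert i I"
    using assms h1 unfolding qq_def by auto
  have "card (insert i I) = n - t + 1" using fin assms by simp
  moreover have "\<forall>l\<in>{1..n}. qq k n I c i a l \<noteq> 0 \<and> qq k n I c i a l \<noteq> k - 1 \<longrightarrow> qq k n I c i a l = (k - 1) div 2"
    using assms unfolding qq_def by auto
  ultimately show "qq k n I c i a \<in> Cset k n (n - t + 1)"
    unfolding Cset_def using pos E by simp
  show "qq k n I c i a \<in> layer k n I c" using pos unfolding layer_def qq_def by auto
qed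

theorem mainTheorem11:
  fixes k n t :: nat and I :: "nat set" and c :: "nat \<Rightarrow> nat" and i j :: nat
  assumes "k \<ge> 2" and "n \<ge> 3" and "odd k"
    and "2 \<le> t" and "t \<le> n - 1"
    and "I \<subseteq> {1..n}" and "card I = n - t"
    and "\<forall>l\<in>I. c l = 0 \<or> c l = k - 1"
    and "i \<in> {1..n} - I" and "j \<in> {1..n} - I" and "i \<noteq> j"
  shows "(\<forall>m. 1 \<le> m \<and> m \<le> n - t \<longrightarrow>
            (\<forall>p\<in>Cset k n m. rotation k n I c i j p = p))
       \<and> restrict_perm (rotation k n I c i j) (Cset k n (n - t + 1)) permutes Cset k n (n - t + 1)
       \<and> \<not> evenperm (restrict_perm (rotation k n I c i j) (Cset k n (n - t + 1)))"
proof -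
  define h where "h = (k-1) div 2"
  have h1: "h \<noteq> 0" "h \<noteq> k - 1" "k - 1 - h = h" "0 \<noteq> k - 1"
    using assms(1,3) unfolding h_def by (auto elim!: oddE)
  have fin: "finite I" using assms(6) finite_subset by blast
  have psi_fix: "psi k i j p = p" if "p i = h" "p j = h" for p
    using that h1 unfolding psi_def by auto
  have Esup: "I \<subseteq> {l\<in>{1..n}. p l = 0 \<or> p l = k - 1}" if "p \<in> layer k n I c" for p
    using that assms(6,8) unfolding layer_def by auto
  have part1: "\<forall>m. 1 \<le> m \<and> m \<le> n - t \<longrightarrow> (\<forall>p\<in>Cset k n m. rotation k n I c i j p = p)"
  proof (intro allI impI ballI)
    fix m p assume m: "1 \<le> m \<and> m \<le> n - t" and p: "p \<in> Cset k n m"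
    show "rotation k n I c i j p = p"
    proof (cases "p \<in> layer k n I c")
      case False then show ?thesis unfolding rotation_def by simp
    next
      case True
      let ?E = "{l\<in>{1..n}. p l = 0 \<or> p l = k - 1}"
      have cE: "card ?E = m" using p unfolding Cset_def by simp
      have sub: "I \<subseteq> ?E" using Esup True .
      have "finite ?E" by simp
      have EI: "?E = I"
        using card_subset_eq[OF \<open>finite ?E\<close> sub] cE m assms(7) sub card_mono[OF \<open>finite ?E\<close> sub]
        by auto
      have "p i = h" "p j = h" using p EI assms(9,10) unfolding Cset_def h_def by auto
      then show ?thesis using True psi_fix unfolding rotation_def by simp
    qed
  qed
  define C where "C = Cset k n (n - t + 1)"
  define a0 where "a0 = qq k n I c i 0"
  define a1 where "a1 = qq k n I c i (k-1)"
  define b0 where "b0 = qq k n I c j 0"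
  define b1 where "b1 = qq k n I c j (k-1)"
  have inC: "a0 \<in> C" "a1 \<in> C" "b0 \<in> C" "b1 \<in> C"
    using qq_facts[OF assms(1,3,6,7,5,8)] assms(9,10) unfolding C_def a0_def a1_def b0_def b1_def
    by auto
  have inL: "a0 \<in> layer k n I c" "a1 \<in> layer k n I c" "b0 \<in> layer k n I c" "b1 \<in> layer k n I c"
    using qq_facts[OF assms(1,3,6,7,5,8)] assms(9,10) unfolding a0_def a1_def b0_def b1_def
    by auto
  have vals: "a0 i = 0" "a1 i = k - 1" "b0 i = h" "b1 i = h"
             "a0 j = h" "a1 j = h" "b0 j = 0" "b1 j = k - 1"
    using assms(9,10,11) unfolding a0_def a1_def b0_def b1_def qq_def h_def by auto
  have dist: "a0 \<noteq> b0" "a0 \<noteq> a1" "a0 \<noteq> b1" "b0 \<noteq> a1" "b0 \<noteq> b1" "a1 \<noteq> b1"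
    using vals h1 by (metis)+
  have psi_a: "psi k i j (qq k n I c i a) = qq k n I c j a" for a
    using assms(9,10,11) h1 unfolding psi_def qq_def h_def by (auto simp: fun_eq_iff)
  have psi_b: "psi k i j (qq k n I c j b) = qq k n I c i (k - 1 - b)" for b
    using assms(9,10,11) h1 unfolding psi_def qq_def h_def by (auto simp: fun_eq_iff)
  define f where "f = Transposition.transpose a0 b0 \<circ> Transposition.transpose b0 a1 \<circ> Transposition.transpose a1 b1"
  have fa: "f a0 = b0" "f b0 = a1" "f a1 = b1" "f b1 = a0"
    unfolding f_def using dist by (simp_all add: transpose_def)
  have pa: "psi k i j a0 = b0" "psi k i j a1 = b1" "psi k i j b0 = a1" "psi k i j b1 = a0"
    unfolding a0_def a1_def b0_def b1_def using psi_a psi_b by simp_all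
  have feq: "restrict_perm (rotation k n I c i j) C = f"
  proof
    fix x
    show "restrict_perm (rotation k n I c i j) C x = f x"
    proof (cases "x \<in> C \<and> x \<in> layer k n I c")
      case False
      then have "x \<notin> {a0, a1, b0, b1}" using inC inL by auto
      then have "f x = x" unfolding f_def by (simp add: transpose_def)
      then show ?thesis using False unfolding restrict_perm_def rotation_def by auto
    next
      case True
      then have xC: "x \<in> C" and xL: "x \<in> layer k n I c" by auto
      let ?E = "{l\<in>{1..n}. x l = 0 \<or> x l = k - 1}"
      have cE: "card ?E = n - t + 1" using xC unfolding C_def Cset_def by simp
      have sub: "I \<subseteq> ?E" using Esup xL .
      have c1: "card (?E - I) = Suc 0" using card_Diff_subset[OF fin sub] cE assms(7) by simp
      obtain e where e: "?E - I = {e}" using iffD1[OF card_1_singleton_iff c1] by (elim exE)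
      have Eeq: "?E = insert e I" using e sub by auto
      have eI: "e \<notin> I" "e \<in> {1..n}" using e by auto
      have xpos: "x \<in> positions k n" using xC unfolding C_def Cset_def by auto
      have xI: "\<forall>l\<in>I. x l = c l" using xL unfolding layer_def by auto
      have xh0: "\<forall>l\<in>{1..n}. x l \<noteq> 0 \<and> x l \<noteq> k - 1 \<longrightarrow> x l = h"
        using xC unfolding C_def Cset_def h_def by auto
      have xh: "\<forall>l\<in>{1..n}. l \<notin> insert e I \<longrightarrow> x l = h"
      proof (intro ballI impI)
        fix l assume l: "l \<in> {1..n}" "l \<notin> insert e I"
        then have "l \<notin> ?E" using Eeq by blast
        then show "x l = h" using l xh0 by blast
      qed
      have xout: "\<forall>l. l \<notin> {1..n} \<longrightarrow> x l = 0" using xpos unfolding positions_def by auto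
      have xe: "x e = 0 \<or> x e = k - 1" using Eeq by blast
      have xq: "x = qq k n I c e (x e)"
      proof
        fix l show "x l = qq k n I c e (x e) l"
          using xI xh xout eI unfolding qq_def h_def[symmetric] by (cases "l \<in> I"; cases "l = e"; cases "l \<in> {1..n}") auto
      qed
      have xq': "x = qq k n I c e v" if "x e = v" for v using xq that by metis
      have rot: "restrict_perm (rotation k n I c i j) C x = psi k i j x"
        using xC xL unfolding restrict_perm_def rotation_def by simp
      show ?thesis
      proof (cases "e = i")
        case True
        show ?thesis using xe
        proof
          assume "x e = 0"
          then have "x = a0" using xq'[OF \<open>x e = 0\<close>] True unfolding a0_def by simp
          then show ?thesis using rot pa fa by simp
        next
          assume "x e = k - 1"
          then have "x = a1" using xq'[OF \<open>x e = k - 1\<close>] True unfolding a1_def by simp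
          then show ?thesis using rot pa fa by simp
        qed
      next
        case ne: False
        show ?thesis
        proof (cases "e = j")
          case True
          show ?thesis using xe
          proof
            assume "x e = 0"
            then have "x = b0" using xq'[OF \<open>x e = 0\<close>] True unfolding b0_def by simp
            then show ?thesis using rot pa fa by simp
          next
            assume "x e = k - 1"
            then have "x = b1" using xq'[OF \<open>x e = k - 1\<close>] True unfolding b1_def by simp
            then show ?thesis using rot pa fa by simp
          qed
        next
          case False
          have "x i = h" "x j = h" using xh assms(9,10) ne False by auto
          then have "psi k i j x = x" using psi_fix by simp
          moreover have "x \<notin> {a0, a1, b0, b1}" using \<open>x i = h\<close> \<open>x j = h\<close> vals h1 by auto
          moreover have "f x = x" using calculation(2) unfolding f_def by (simp add: transpose_def)
          ultimately show ?thesis using rot by simp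
        qed
      qed
    qed
  qed
  have perm: "f permutes C"
    unfolding f_def using inC
    by (intro permutes_compose permutes_swap_id) auto
  have odd: "\<not> evenperm f"
  proof -
    have p1: "permutation (Transposition.transpose a0 b0)" "permutation (Transposition.transpose b0 a1)"
      "permutation (Transposition.transpose a1 b1)" by (simp_all add: permutation_swap_id)
    show ?thesis unfolding f_def using p1 dist
      by (simp add: evenperm_comp permutation_compose evenperm_swap)
  qed
  show ?thesis using part1 perm odd feq unfolding C_def by simp
qed

end
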